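(* Up to graph isomorphism, there is exactly one graph with exactly three vertices that is isomorphic to $\Gamma_E(R)$ for some commutative Noetherian ring $R$ with unity.
   Context: For $x,y\in R$ write $x\sim y$ iff $\operatorname{ann}(x)=\operatorname{ann}(y)$; $[x]$ denotes the equivalence class of $x$. Let $Z^*(R)$ be the set of nonzero zero divisors of $R$. The graph $\Gamma_E(R)$ is the simple graph whose vertices are the classes $[x]$ with $x\in Z^*(R)$, two distinct vertices $[x],[y]$ being adjacent iff $xy=0$ (this is independent of representatives). *)

theory Defs
  imports "HOL-Algebra.Ring_Divisibility"
begin

definition simple_graph :: "'v set \<Rightarrow> ('v \<Rightarrow> 'v \<Rightarrow> bool) \<Rightarrow> bool" where
  "simple_graph V E \<longleftrightarrow> (\<forall>x y. E x y \<longrightarrow> x \<in> V \<and> y \<in> V \<and> x \<noteq> y \<and> E y x)"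

definition graph_iso :: "'v set \<Rightarrow> ('v \<Rightarrow> 'v \<Rightarrow> bool) \<Rightarrow> 'w set \<Rightarrow> ('w \<Rightarrow> 'w \<Rightarrow> bool) \<Rightarrow> bool" where
  "graph_iso V E W F \<longleftrightarrow>
     (\<exists>f. bij_betw f V W \<and> (\<forall>x\<in>V. \<forall>y\<in>V. E x y \<longleftrightarrow> F (f x) (f y)))"

definition ann :: "('a, 'b) ring_scheme \<Rightarrow> 'a \<Rightarrow> 'a set" where
  "ann R x = {y \<in> carrier R. x \<otimes>\<^bsub>R\<^esub> y = \<zero>\<^bsub>R\<^esub>}"

definition zd_star :: "('a, 'b) ring_scheme \<Rightarrow> 'a set" where
  "zd_star R = {x \<in> carrier R. x \<noteq> \<zero>\<^bsub>R\<^esub> \<and>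
      (\<exists>y \<in> carrier R. y \<noteq> \<zero>\<^bsub>R\<^esub> \<and> x \<otimes>\<^bsub>R\<^esub> y = \<zero>\<^bsub>R\<^esub>)}"

definition ann_class :: "('a, 'b) ring_scheme \<Rightarrow> 'a \<Rightarrow> 'a set" where
  "ann_class R x = {y \<in> carrier R. ann R y = ann R x}"

definition GammaE_V :: "('a, 'b) ring_scheme \<Rightarrow> 'a set set" where
  "GammaE_V R = ann_class R ` zd_star R"

definition GammaE_E :: "('a, 'b) ring_scheme \<Rightarrow> 'a set \<Rightarrow> 'a set \<Rightarrow> bool" where
  "GammaE_E R A B \<longleftrightarrow> A \<in> GammaE_V R \<and> B \<in> GammaE_V R \<and> A \<noteq> B \<and>
      (\<exists>x\<in>A. \<exists>y\<in>B. x \<otimes>\<^bsub>R\<^esub> y = \<zero>\<^bsub>R\<^esub>)"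

end

theory Submission
  imports Defs
begin
definition PV :: "nat set" where "PV = {0,1,2}"
definition PE :: "nat \<Rightarrow> nat \<Rightarrow> bool" where
  "PE x y \<longleftrightarrow> (x=0\<and>y=1)\<or>(x=1\<and>y=0)\<or>(x=1\<and>y=2)\<or>(x=2\<and>y=1)"


definition R16 :: "nat ring" where
  "R16 = \<lparr>carrier = {..<16}, mult = (\<lambda>x y. x * y mod 16), one = 1,
          zero = 0, add = (\<lambda>x y. (x + y) mod 16)\<rparr>"

lemma R16_simps[simp]: "carrier R16 = {..<16}" "mult R16 x y = x * y mod 16"
  "one R16 = 1" "zero R16 = 0" "add R16 x y = (x + y) mod 16"
  by (simp_all add: R16_def)

lemma cring_R16: "cring R16"
proof (rule cringI)
  show "abelian_group R16"
  proof (rule abelian_groupI)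
    fix x assume "x \<in> carrier R16"
    then have "x < 16" by simp
    show "\<exists>y \<in> carrier R16. y \<oplus>\<^bsub>R16\<^esub> x = \<zero>\<^bsub>R16\<^esub>"
    proof (cases "x = 0")
      case True thus ?thesis by (intro bexI[of _ 0]) auto
    next
      case False thus ?thesis using \<open>x<16\<close> by (intro bexI[of _ "16 - x"]) auto
    qed
  next
    fix x y z :: nat
    show "x \<oplus>\<^bsub>R16\<^esub> y \<oplus>\<^bsub>R16\<^esub> z = x \<oplus>\<^bsub>R16\<^esub> (y \<oplus>\<^bsub>R16\<^esub> z)"
      by (simp only: R16_simps mod_add_left_eq mod_add_right_eq add.assoc)
  next
    fix x y :: nat
    show "x \<oplus>\<^bsub>R16\<^esub> y = y \<oplus>\<^bsub>R16\<^esub> x" by (simp add: add.commute)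
  qed auto
  show "comm_monoid R16"
  proof (rule comm_monoidI)
    fix x y z assume "x \<in> carrier R16" "y \<in> carrier R16" "z \<in> carrier R16"
    show "x \<otimes>\<^bsub>R16\<^esub> y \<otimes>\<^bsub>R16\<^esub> z = x \<otimes>\<^bsub>R16\<^esub> (y \<otimes>\<^bsub>R16\<^esub> z)"
      by (simp only: R16_simps mod_mult_left_eq mod_mult_right_eq mult.assoc)
  qed (auto simp: mult.commute)
  show "\<And>x y z. x \<in> carrier R16 \<Longrightarrow> y \<in> carrier R16 \<Longrightarrow> z \<in> carrier R16 \<Longrightarrow>
    (x \<oplus>\<^bsub>R16\<^esub> y) \<otimes>\<^bsub>R16\<^esub> z = x \<otimes>\<^bsub>R16\<^esub> z \<oplus>\<^bsub>R16\<^esub> y \<otimes>\<^bsub>R16\<^esub> z"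
    by (simp only: R16_simps mod_mult_left_eq mod_add_eq distrib_right)
qed

lemma noeth_R16: "noetherian_ring R16"
proof -
  interpret cring R16 by (rule cring_R16)
  show ?thesis
  proof (rule noetherian_ringI)
    fix I assume I: "ideal I R16"
    have sub: "I \<subseteq> carrier R16" using I by (meson additive_subgroup.a_subset ideal.axioms(1))
    have "genideal R16 I = I" using genideal_self[OF sub] genideal_minimal[OF I] by blast
    moreover have "finite I" using sub by (rule finite_subset) simp
    ultimately show "\<exists>A \<subseteq> carrier R16. finite A \<and> I = genideal R16 A" using sub by blast
  qed
qed



lemma cases16: "(y::nat) < 16 \<Longrightarrow> y=0\<or>y=1\<or>y=2\<or>y=3\<or>y=4\<or>y=5\<or>y=6\<or>y=7\<or>y=8\<or>y=9\<or>y=10\<or>y=11\<or>y=12\<or>y=13\<or>y=14\<or>y=15"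
  by presburger

definition annv :: "nat \<Rightarrow> nat set" where
 "annv y = (if y = 0 then {..<16} else if odd y then {0} else if y mod 4 = 2 then {0,8}
    else if y mod 8 = 4 then {0,4,8,12} else {0,2,4,6,8,10,12,14})"

lemma ann_R16: assumes "y < 16" shows "ann R16 y = annv y"
proof -
  have sub: "annv y \<subseteq> {..<16}" by (auto simp: annv_def)
  have "z < 16 \<and> y*z mod 16 = 0 \<longleftrightarrow> z \<in> annv y" for z
  proof (cases "z < 16")
    case True
    show ?thesis using cases16[OF assms] cases16[OF True] by (elim disjE; simp add: annv_def)
  qed (use sub in auto)
  thus ?thesis unfolding ann_def by auto
qed


lemma a1: "(x::nat) \<in> zd_star R16 \<Longrightarrow> x < 16 \<and> x \<noteq> 0 \<and> (\<exists>y. y < 16 \<and> y \<noteq> 0 \<and> x*y mod 16 = 0)"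
  by (simp add: zd_star_def Bex_def)

lemma a2: "(x::nat) < 16 \<Longrightarrow> x \<noteq> 0 \<Longrightarrow> y < 16 \<Longrightarrow> y \<noteq> 0 \<Longrightarrow> x*y mod 16 = 0 \<Longrightarrow> x \<in> zd_star R16"
  unfolding zd_star_def mem_Collect_eq R16_simps
  apply (intro conjI bexI[of _ y])
  apply simp_all
  done
lemma a3: "(x::nat) < 16 \<Longrightarrow> x \<noteq> 0 \<Longrightarrow> y < 16 \<Longrightarrow> y \<noteq> 0 \<Longrightarrow> x*y mod 16 = 0 \<Longrightarrow> even x"
proof -
  assume x: "x < 16" "x \<noteq> 0" and y: "y < 16" "y \<noteq> 0" "x*y mod 16 = 0"
  have "y \<in> ann R16 x" unfolding ann_def using y by simp
  then have "y \<in> annv x" using ann_R16[OF x(1)] by simp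
  moreover have "odd x \<Longrightarrow> annv x = {0}" using x(2) by (simp add: annv_def)
  ultimately show "even x" using y(2) by (metis singletonD)
qed
lemma zd_R16: "zd_star R16 = {2,4,6,8,10,12,14}"
proof (rule Set.set_eqI)
  fix x :: nat
  show "x \<in> zd_star R16 \<longleftrightarrow> x \<in> {2,4,6,8,10,12,14}"
  proof
    assume "x \<in> zd_star R16"
    then obtain y where h: "x < 16" "x \<noteq> 0" "y < 16" "y \<noteq> 0" "x*y mod 16 = 0" using a1 by metis
    have ev: "even x" by (rule a3[OF h])
    show "x \<in> {2,4,6,8,10,12,14}" using cases16[OF h(1)] ev h(2) by (elim disjE) simp_all
  next
    assume "x \<in> {2,4,6,8,10,12,14}"
    then show "x \<in> zd_star R16" by (elim insertE emptyE) (rule a2[of _ 8]; simp)+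
  qed
qed

definition tp :: "nat \<Rightarrow> nat" where
 "tp y = (if y = 0 then 0 else if odd y then 1 else if y mod 4 = 2 then 2
    else if y mod 8 = 4 then 3 else 4)"

definition annt :: "nat \<Rightarrow> nat set" where
 "annt t = (if t = 0 then {..<16} else if t = 1 then {0} else if t = 2 then {0,8}
    else if t = 3 then {0,4,8,12} else {0,2,4,6,8,10,12,14})"

lemma annv_annt: "annv y = annt (tp y)"
  unfolding annv_def annt_def tp_def by simp

lemma tp_le: "tp y \<le> 4" unfolding tp_def by simp

lemma annt_inj: assumes "t \<le> 4" "t' \<le> 4" "annt t = annt t'" shows "t = t'"
proof -
  have m: "\<And>k. (k \<in> annt t) = (k \<in> annt t')" using assms(3) by simp
  have "t=0\<or>t=1\<or>t=2\<or>t=3\<or>t=4" "t'=0\<or>t'=1\<or>t'=2\<or>t'=3\<or>t'=4" using assms(1,2) by linarith+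
  thus ?thesis using m[of 1] m[of 2] m[of 4] m[of 8]
    by (elim disjE; simp add: annt_def)
qed

lemma annv_typ: "annv y = annv y' \<longleftrightarrow> tp y = tp y'"
  using annt_inj[OF tp_le tp_le] annv_annt by metis

lemma class_R16: assumes "x < 16" shows "ann_class R16 x = {y. y < 16 \<and> tp y = tp x}"
  unfolding ann_class_def using ann_R16 assms annv_typ by (simp add: set_eq_iff) metis

definition C2 :: "nat set" where "C2 = {2,6,10,14}"
definition C4 :: "nat set" where "C4 = {4,12}"
definition C8 :: "nat set" where "C8 = {8}"

lemma Kset: assumes "\<And>y. y < 16 \<Longrightarrow> tp y = t \<Longrightarrow> y \<in> S" "\<And>y. y \<in> S \<Longrightarrow> y < 16 \<and> tp y = t"
  shows "{y. y < 16 \<and> tp y = t} = S"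
  using assms by blast

lemma K2: "{y. y < 16 \<and> tp y = 2} = C2"
proof (rule Kset)
  fix y :: nat assume a: "y < 16" "tp y = 2" then show "y \<in> C2"
    using cases16[OF a(1)] unfolding C2_def by (elim disjE) (simp_all add: tp_def)
next
  fix y assume "y \<in> C2" then show "y < 16 \<and> tp y = 2"
    unfolding C2_def by (elim insertE emptyE) (simp_all add: tp_def)
qed

lemma K3: "{y. y < 16 \<and> tp y = 3} = C4"
proof (rule Kset)
  fix y :: nat assume a: "y < 16" "tp y = 3" then show "y \<in> C4"
    using cases16[OF a(1)] unfolding C4_def by (elim disjE) (simp_all add: tp_def)
next
  fix y assume "y \<in> C4" then show "y < 16 \<and> tp y = 3"
    unfolding C4_def by (elim insertE emptyE) (simp_all add: tp_def)
qed

lemma K4: "{y. y < 16 \<and> tp y = 4} = C8"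
proof (rule Kset)
  fix y :: nat assume a: "y < 16" "tp y = 4" then show "y \<in> C8"
    using cases16[OF a(1)] unfolding C8_def by (elim disjE) (simp_all add: tp_def)
next
  fix y assume "y \<in> C8" then show "y < 16 \<and> tp y = 4"
    unfolding C8_def by (elim insertE emptyE) (simp_all add: tp_def)
qed

lemma classes:
  "ann_class R16 2 = C2" "ann_class R16 6 = C2" "ann_class R16 10 = C2" "ann_class R16 14 = C2"
  "ann_class R16 4 = C4" "ann_class R16 12 = C4" "ann_class R16 8 = C8"
  by (simp_all add: class_R16 K2[symmetric] K3[symmetric] K4[symmetric] tp_def)


lemma V_R16: "GammaE_V R16 = {C2, C4, C8}"
  unfolding GammaE_V_def zd_R16 by (simp add: classes insert_commute)

lemma C_mem: "2 \<in> C2" "8 \<notin> C2" "8 \<in> C8" "2 \<notin> C8" "4 \<in> C4" "8 \<notin> C4" "2 \<notin> C4"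
  by (simp_all add: C2_def C4_def C8_def)

lemma C_dist: "C2 \<noteq> C4" "C2 \<noteq> C8" "C4 \<noteq> C8" "C4 \<noteq> C2" "C8 \<noteq> C2" "C8 \<noteq> C4"
  using C_mem by metis+

lemma E_R16: "GammaE_E R16 A B \<longleftrightarrow> A \<in> {C2,C4,C8} \<and> B \<in> {C2,C4,C8} \<and> A \<noteq> B \<and>
   (\<exists>x\<in>A. \<exists>y\<in>B. x * y mod 16 = 0)"
  unfolding GammaE_E_def V_R16 by simp

lemma E_vals:
  "GammaE_E R16 C2 C8" "GammaE_E R16 C8 C2" "GammaE_E R16 C4 C8" "GammaE_E R16 C8 C4"
  "\<not> GammaE_E R16 C2 C4" "\<not> GammaE_E R16 C4 C2"
  "\<not> GammaE_E R16 C2 C2" "\<not> GammaE_E R16 C4 C4" "\<not> GammaE_E R16 C8 C8"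
  unfolding E_R16 using C_dist by (simp_all add: C2_def C4_def C8_def)

definition g16 :: "nat set \<Rightarrow> nat" where
  "g16 X = (if 8 \<in> X then 1 else if 2 \<in> X then 0 else 2)"

lemma g16_vals: "g16 C2 = 0" "g16 C8 = 1" "g16 C4 = 2"
  using C_mem by (simp_all add: g16_def)

lemma iso_R16: "graph_iso (GammaE_V R16) (GammaE_E R16) PV PE"
  unfolding graph_iso_def V_R16
proof (intro exI conjI)
  show "bij_betw g16 {C2, C4, C8} PV"
    unfolding bij_betw_def PV_def using g16_vals C_dist
    by (auto simp: inj_on_def)
  show "\<forall>x\<in>{C2, C4, C8}. \<forall>y\<in>{C2, C4, C8}. GammaE_E R16 x y = PE (g16 x) (g16 y)"
    using E_vals g16_vals by (simp add: PE_def)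
qed


context cring
begin


lemma ann_iff: "t \<in> ann R x \<longleftrightarrow> t \<in> carrier R \<and> x \<otimes> t = \<zero>"
  by (simp add: ann_def)

lemma zd_iff: "x \<in> zd_star R \<longleftrightarrow> x \<in> carrier R \<and> x \<noteq> \<zero> \<and> (\<exists>y\<in>carrier R. y \<noteq> \<zero> \<and> x \<otimes> y = \<zero>)"
  by (simp add: zd_star_def)

lemma zdI: "x \<in> carrier R \<Longrightarrow> x \<noteq> \<zero> \<Longrightarrow> y \<in> carrier R \<Longrightarrow> y \<noteq> \<zero> \<Longrightarrow> x \<otimes> y = \<zero> \<Longrightarrow> x \<in> zd_star R"
  by (auto simp: zd_star_def)

lemma zdE: "x \<in> zd_star R \<Longrightarrow> (\<And>y. x \<in> carrier R \<Longrightarrow> x \<noteq> \<zero> \<Longrightarrow> y \<in> carrier R \<Longrightarrow> y \<noteq> \<zero> \<Longrightarrow> x \<otimes> y = \<zero> \<Longrightarrow> P) \<Longrightarrow> P"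
  by (auto simp: zd_star_def)

lemma sum_zero_iff: "x \<in> carrier R \<Longrightarrow> y \<in> carrier R \<Longrightarrow> x \<oplus> y = \<zero> \<Longrightarrow> x = \<zero> \<longleftrightarrow> y = \<zero>"
  by (metis l_zero r_zero)

lemma class_self: "x \<in> carrier R \<Longrightarrow> x \<in> ann_class R x"
  by (simp add: ann_class_def)

lemma class_eq_iff: "x \<in> carrier R \<Longrightarrow> y \<in> carrier R \<Longrightarrow> ann_class R x = ann_class R y \<longleftrightarrow> ann R x = ann R y"
  unfolding ann_class_def by blast

lemma class_mem: "z \<in> ann_class R x \<Longrightarrow> z \<in> carrier R \<and> ann R z = ann R x"
  by (simp add: ann_class_def)

lemma edge_iff:
  assumes x: "x \<in> zd_star R" and y: "y \<in> zd_star R"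
  shows "GammaE_E R (ann_class R x) (ann_class R y) \<longleftrightarrow> ann R x \<noteq> ann R y \<and> x \<otimes> y = \<zero>"
proof -
  have xc: "x \<in> carrier R" and yc: "y \<in> carrier R" using x y by (auto simp: zd_iff)
  have V: "ann_class R x \<in> GammaE_V R" "ann_class R y \<in> GammaE_V R"
    using x y by (auto simp: GammaE_V_def)
  show ?thesis
  proof
    assume "GammaE_E R (ann_class R x) (ann_class R y)"
    then obtain x' y' where x': "x' \<in> ann_class R x" and y': "y' \<in> ann_class R y"
      and xy: "x' \<otimes> y' = \<zero>" and ne: "ann_class R x \<noteq> ann_class R y"
      unfolding GammaE_E_def by blast
    have x'c: "x' \<in> carrier R" "ann R x' = ann R x" using class_mem[OF x'] by auto
    have y'c: "y' \<in> carrier R" "ann R y' = ann R y" using class_mem[OF y'] by auto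
    have "y' \<in> ann R x'" using xy y'c by (simp add: ann_iff)
    then have "x \<otimes> y' = \<zero>" using x'c by (simp add: ann_iff)
    then have "y' \<otimes> x = \<zero>" using xc y'c by (simp add: m_comm)
    then have "x \<in> ann R y'" using xc unfolding ann_def by blast
    then have "x \<in> ann R y" using y'c by simp
    then have "y \<otimes> x = \<zero>" by (simp add: ann_iff)
    then have "x \<otimes> y = \<zero>" using xc yc by (simp add: m_comm)
    moreover have "ann R x \<noteq> ann R y" using ne class_eq_iff[OF xc yc] by simp
    ultimately show "ann R x \<noteq> ann R y \<and> x \<otimes> y = \<zero>" by simp
  next
    assume h: "ann R x \<noteq> ann R y \<and> x \<otimes> y = \<zero>"
    show "GammaE_E R (ann_class R x) (ann_class R y)"
      unfolding GammaE_E_def using V h class_eq_iff[OF xc yc] class_self[OF xc] class_self[OF yc]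
      by blast
  qed
qed

lemma no_isolated:
  assumes x: "x \<in> zd_star R" and z: "z \<in> zd_star R" and ne: "ann R z \<noteq> ann R x"
  shows "\<exists>y\<in>zd_star R. ann R y \<noteq> ann R x \<and> x \<otimes> y = \<zero>"
proof (rule ccontr)
  assume nex: "\<not> ?thesis"
  have xc: "x \<in> carrier R" "x \<noteq> \<zero>" and zc: "z \<in> carrier R" "z \<noteq> \<zero>" using x z by (auto simp: zd_iff)
  obtain y where y: "y \<in> carrier R" "y \<noteq> \<zero>" "x \<otimes> y = \<zero>" using x by (auto simp: zd_iff)
  have yz: "y \<in> zd_star R" using y xc by (intro zdI[of y x]) (auto simp: m_comm)
  have "ann R y = ann R x" using nex yz y by blast
  moreover have "x \<in> ann R y" using y xc by (simp add: ann_iff m_comm)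
  ultimately have xx: "x \<otimes> x = \<zero>" by (simp add: ann_iff)
  have xz: "x \<otimes> z \<noteq> \<zero>" using nex z ne by blast
  define u where "u = x \<otimes> z"
  have uc: "u \<in> carrier R" using xc zc by (simp add: u_def)
  have xu: "x \<otimes> u = \<zero>" unfolding u_def using xc zc xx by (simp add: m_assoc[symmetric])
  have uz: "u \<in> zd_star R" using uc xz xc xu by (intro zdI[of u x]) (auto simp: u_def m_comm)
  have annu: "ann R u = ann R x" using nex uz xu by blast
  obtain w where w: "w \<in> carrier R" "w \<noteq> \<zero>" "z \<otimes> w = \<zero>" using z by (auto simp: zd_iff)
  have "u \<otimes> w = \<zero>" unfolding u_def using xc zc w by (simp add: m_assoc)
  then have "w \<in> ann R u" using w by (simp add: ann_iff)
  then have "w \<in> ann R x" using annu by simp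
  then have xw: "x \<otimes> w = \<zero>" by (simp add: ann_iff)
  have wz: "w \<in> zd_star R" using w zc by (intro zdI[of w z]) (auto simp: m_comm)
  have "ann R w = ann R x" using nex wz xw by blast
  moreover have "z \<in> ann R w" using w zc by (simp add: ann_iff m_comm)
  ultimately have "x \<otimes> z = \<zero>" by (simp add: ann_iff)
  with xz show False by simp
qed

lemma sum_zd:
  assumes a: "a \<in> zd_star R" and b: "b \<in> zd_star R" and c: "c \<in> zd_star R"
    and ne: "ann R a \<noteq> ann R b" and ca: "c \<otimes> a = \<zero>" and cb: "c \<otimes> b = \<zero>"
  shows "a \<oplus> b \<in> zd_star R"
proof -
  have ac: "a \<in> carrier R" and bc: "b \<in> carrier R" and cc: "c \<in> carrier R" "c \<noteq> \<zero>"
    using a b c by (auto simp: zd_iff)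
  have nz: "a \<oplus> b \<noteq> \<zero>"
  proof
    assume s0: "a \<oplus> b = \<zero>"
    have "t \<in> ann R a \<longleftrightarrow> t \<in> ann R b" for t
    proof (cases "t \<in> carrier R")
      case True
      have "a \<otimes> t \<oplus> b \<otimes> t = \<zero>" using s0 ac bc True by (simp add: l_distr[symmetric])
      then have "a \<otimes> t = \<zero> \<longleftrightarrow> b \<otimes> t = \<zero>" using ac bc True by (intro sum_zero_iff) auto
      then show ?thesis by (simp add: ann_iff)
    qed (simp add: ann_iff)
    then have "ann R a = ann R b" by blast
    with ne show False by simp
  qed
  have "a \<otimes> c = \<zero>" "b \<otimes> c = \<zero>" using ac bc cc ca cb by (simp_all add: m_comm)
  then have "(a \<oplus> b) \<otimes> c = \<zero>" using ac bc cc by (simp add: l_distr)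
  then show ?thesis using nz ac bc cc by (intro zdI[of _ c]) auto
qed

lemma tri_core_b:
  assumes a: "a \<in> zd_star R" and b: "b \<in> zd_star R" and c: "c \<in> zd_star R"
    and nab: "ann R a \<noteq> ann R b" and nbc: "ann R b \<noteq> ann R c" and nac: "ann R a \<noteq> ann R c"
    and ab: "a \<otimes> b = \<zero>" and bc: "b \<otimes> c = \<zero>" and ac: "a \<otimes> c = \<zero>"
    and cover: "\<And>y. y \<in> zd_star R \<Longrightarrow> ann R y = ann R a \<or> ann R y = ann R b \<or> ann R y = ann R c"
    and aa: "a \<otimes> a = \<zero>" and bb: "b \<otimes> b = \<zero>"
  shows False
proof -
  have ar: "a \<in> carrier R" "a \<noteq> \<zero>" and br: "b \<in> carrier R" "b \<noteq> \<zero>" and cr: "c \<in> carrier R" "c \<noteq> \<zero>"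
    using a b c by (auto simp: zd_iff)
  have ba: "b \<otimes> a = \<zero>" using ab ar br by (simp add: m_comm)
  have cb: "c \<otimes> b = \<zero>" using bc br cr by (simp add: m_comm)
  have ca: "c \<otimes> a = \<zero>" using ac ar cr by (simp add: m_comm)
  have a_in_B: "a \<in> ann R b" and a_in_C: "a \<in> ann R c" and a_in_A: "a \<in> ann R a"
    using ba ca aa ar by (simp_all add: ann_iff)
  have b_in_A: "b \<in> ann R a" and b_in_C: "b \<in> ann R c" and b_in_B: "b \<in> ann R b"
    using ab cb bb br by (simp_all add: ann_iff)
  have BA: "ann R b \<subseteq> ann R a"
  proof
    fix t assume t: "t \<in> ann R b"
    then have tc: "t \<in> carrier R" and bt: "b \<otimes> t = \<zero>" by (auto simp: ann_iff)
    show "t \<in> ann R a"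
    proof (rule ccontr)
      assume "t \<notin> ann R a"
      then have at: "a \<otimes> t \<noteq> \<zero>" using tc by (simp add: ann_iff)
      then have tnz: "t \<noteq> \<zero>" using ar by auto
      have tz: "t \<in> zd_star R" using tc tnz br bt by (intro zdI[of t b]) (auto simp: m_comm)
      have "a \<notin> ann R t" using at tc ar by (simp add: ann_iff m_comm)
      then have "ann R t \<noteq> ann R b" "ann R t \<noteq> ann R c" "ann R t \<noteq> ann R a"
        using a_in_B a_in_C a_in_A by auto
      with cover[OF tz] show False by simp
    qed
  qed
  then obtain p where p: "p \<in> ann R a" "p \<notin> ann R b" using nab by blast
  have pc: "p \<in> carrier R" and ap: "a \<otimes> p = \<zero>" using p by (auto simp: ann_iff)
  have bp: "b \<otimes> p \<noteq> \<zero>" using p pc by (simp add: ann_iff)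
  have pnz: "p \<noteq> \<zero>" using bp br by auto
  have pz: "p \<in> zd_star R" using pc pnz ar ap by (intro zdI[of p a]) (auto simp: m_comm)
  have "b \<notin> ann R p" using bp pc br by (simp add: ann_iff m_comm)
  then have "ann R p \<noteq> ann R b" "ann R p \<noteq> ann R c" "ann R p \<noteq> ann R a"
    using b_in_B b_in_C b_in_A by auto
  with cover[OF pz] show False by simp
qed

lemma tri_core:
  assumes a: "a \<in> zd_star R" and b: "b \<in> zd_star R" and c: "c \<in> zd_star R"
    and nab: "ann R a \<noteq> ann R b" and nbc: "ann R b \<noteq> ann R c" and nac: "ann R a \<noteq> ann R c"
    and ab: "a \<otimes> b = \<zero>" and bc: "b \<otimes> c = \<zero>" and ac: "a \<otimes> c = \<zero>"
    and cover: "\<And>y. y \<in> zd_star R \<Longrightarrow> ann R y = ann R a \<or> ann R y = ann R b \<or> ann R y = ann R c"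
    and maxB: "\<not> ann R a \<subset> ann R b" and maxC: "\<not> ann R a \<subset> ann R c"
  shows False
proof -
  have ar: "a \<in> carrier R" "a \<noteq> \<zero>" and br: "b \<in> carrier R" "b \<noteq> \<zero>" and cr: "c \<in> carrier R" "c \<noteq> \<zero>"
    using a b c by (auto simp: zd_iff)
  have ba: "b \<otimes> a = \<zero>" using ab ar br by (simp add: m_comm)
  have cb: "c \<otimes> b = \<zero>" using bc br cr by (simp add: m_comm)
  have ca: "c \<otimes> a = \<zero>" using ac ar cr by (simp add: m_comm)
  have aa: "a \<otimes> a = \<zero>"
  proof -
    have sz: "a \<oplus> b \<in> zd_star R" by (rule sum_zd[OF a b c nab ca cb])
    have sc: "a \<oplus> b \<in> carrier R" using ar br by simp
    consider "ann R (a \<oplus> b) = ann R a" | "ann R (a \<oplus> b) = ann R b" | "ann R (a \<oplus> b) = ann R c"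
      using cover[OF sz] by blast
    then show ?thesis
    proof cases
      case 1
      have "ann R a \<subseteq> ann R b"
      proof
        fix t assume t: "t \<in> ann R a"
        then have tc: "t \<in> carrier R" and at: "a \<otimes> t = \<zero>" by (auto simp: ann_iff)
        have "t \<in> ann R (a \<oplus> b)" using t 1 by simp
        then have "(a \<oplus> b) \<otimes> t = \<zero>" by (simp add: ann_iff)
        then have "b \<otimes> t = \<zero>" using at ar br tc by (simp add: l_distr)
        then show "t \<in> ann R b" using tc by (simp add: ann_iff)
      qed
      with maxB nab show ?thesis by blast
    next
      case 2
      have "a \<in> ann R (a \<oplus> b)" using 2 ba ar by (simp add: ann_iff)
      then have "(a \<oplus> b) \<otimes> a = \<zero>" by (simp add: ann_iff)
      then show ?thesis using ba ar br by (simp add: l_distr)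
    next
      case 3
      have "a \<in> ann R (a \<oplus> b)" using 3 ca ar by (simp add: ann_iff)
      then have "(a \<oplus> b) \<otimes> a = \<zero>" by (simp add: ann_iff)
      then show ?thesis using ba ar br by (simp add: l_distr)
    qed
  qed
  have "b \<otimes> b = \<zero> \<or> c \<otimes> c = \<zero>"
  proof -
    have sz: "b \<oplus> c \<in> zd_star R" by (rule sum_zd[OF b c a nbc ab ac])
    consider "ann R (b \<oplus> c) = ann R a" | "ann R (b \<oplus> c) = ann R b" | "ann R (b \<oplus> c) = ann R c"
      using cover[OF sz] by blast
    then show ?thesis
    proof cases
      case 1
      have "b \<in> ann R (b \<oplus> c)" using 1 ab br by (simp add: ann_iff)
      then have "(b \<oplus> c) \<otimes> b = \<zero>" by (simp add: ann_iff)
      then show ?thesis using cb br cr by (simp add: l_distr)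
    next
      case 2
      have "c \<in> ann R (b \<oplus> c)" using 2 bc cr by (simp add: ann_iff)
      then have "(b \<oplus> c) \<otimes> c = \<zero>" by (simp add: ann_iff)
      then show ?thesis using bc br cr by (simp add: l_distr)
    next
      case 3
      have "b \<in> ann R (b \<oplus> c)" using 3 cb br by (simp add: ann_iff)
      then have "(b \<oplus> c) \<otimes> b = \<zero>" by (simp add: ann_iff)
      then show ?thesis using cb br cr by (simp add: l_distr)
    qed
  qed
  then show False
  proof
    assume "b \<otimes> b = \<zero>"
    then show False using tri_core_b[OF a b c nab nbc nac ab bc ac cover aa] by blast
  next
    assume cc: "c \<otimes> c = \<zero>"
    have cover': "\<And>y. y \<in> zd_star R \<Longrightarrow> ann R y = ann R a \<or> ann R y = ann R c \<or> ann R y = ann R b"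
      using cover by blast
    show False using tri_core_b[OF a c b nac nbc[symmetric] nab ac cb ab cover' aa cc] by blast
  qed
qed

lemma no_triangle:
  assumes a: "a \<in> zd_star R" and b: "b \<in> zd_star R" and c: "c \<in> zd_star R"
    and nab: "ann R a \<noteq> ann R b" and nbc: "ann R b \<noteq> ann R c" and nac: "ann R a \<noteq> ann R c"
    and ab: "a \<otimes> b = \<zero>" and bc: "b \<otimes> c = \<zero>" and ac: "a \<otimes> c = \<zero>"
    and cover: "\<And>y. y \<in> zd_star R \<Longrightarrow> ann R y = ann R a \<or> ann R y = ann R b \<or> ann R y = ann R c"
  shows False
proof -
  have ar: "a \<in> carrier R" and br: "b \<in> carrier R" and cr: "c \<in> carrier R"
    using a b c by (auto simp: zd_iff)
  have ba: "b \<otimes> a = \<zero>" using ab ar br by (simp add: m_comm)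
  have cb: "c \<otimes> b = \<zero>" using bc br cr by (simp add: m_comm)
  have ca: "c \<otimes> a = \<zero>" using ac ar cr by (simp add: m_comm)
  let ?A = "ann R a" and ?B = "ann R b" and ?C = "ann R c"
  have "(\<not> ?A \<subset> ?B \<and> \<not> ?A \<subset> ?C) \<or> (\<not> ?B \<subset> ?A \<and> \<not> ?B \<subset> ?C) \<or> (\<not> ?C \<subset> ?A \<and> \<not> ?C \<subset> ?B)"
    by blast
  then show False
  proof (elim disjE conjE)
    assume "\<not> ?A \<subset> ?B" "\<not> ?A \<subset> ?C"
    then show False using tri_core[OF a b c nab nbc nac ab bc ac cover] by blast
  next
    assume h: "\<not> ?B \<subset> ?A" "\<not> ?B \<subset> ?C"
    have cover': "\<And>y. y \<in> zd_star R \<Longrightarrow> ann R y = ?B \<or> ann R y = ?A \<or> ann R y = ?C"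
      using cover by blast
    show False using tri_core[OF b a c nab[symmetric] nac nbc ba ac bc cover'] h by blast
  next
    assume h: "\<not> ?C \<subset> ?A" "\<not> ?C \<subset> ?B"
    have cover': "\<And>y. y \<in> zd_star R \<Longrightarrow> ann R y = ?C \<or> ann R y = ?A \<or> ann R y = ?B"
      using cover by blast
    show False using tri_core[OF c a b nac[symmetric] nab nbc[symmetric] ca ab cb cover'] h by blast
  qed
qed

end


lemma GV_E: "X \<in> GammaE_V R \<Longrightarrow> (\<And>x. x \<in> zd_star R \<Longrightarrow> X = ann_class R x \<Longrightarrow> P) \<Longrightarrow> P"
  unfolding GammaE_V_def by blast

lemma GV_I: "x \<in> zd_star R \<Longrightarrow> ann_class R x \<in> GammaE_V R"
  unfolding GammaE_V_def by blast

lemma no_isolated_V: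
  assumes R: "cring R" and X: "X \<in> GammaE_V R" and Y: "Y \<in> GammaE_V R" "Y \<noteq> X"
  shows "\<exists>Z. GammaE_E R X Z"
proof -
  interpret cring R by (rule R)
  obtain x where x: "x \<in> zd_star R" "X = ann_class R x" using X by (rule GV_E)
  obtain z where z: "z \<in> zd_star R" "Y = ann_class R z" using Y(1) by (rule GV_E)
  have xc: "x \<in> carrier R" and zc: "z \<in> carrier R" using x z by (auto simp: zd_iff)
  have "ann R z \<noteq> ann R x" using Y(2) x z class_eq_iff[OF zc xc] by simp
  then obtain y where y: "y \<in> zd_star R" "ann R y \<noteq> ann R x" "x \<otimes>\<^bsub>R\<^esub> y = \<zero>\<^bsub>R\<^esub>"
    using no_isolated[OF x(1) z(1)] by blast
  have "GammaE_E R (ann_class R x) (ann_class R y)" using edge_iff[OF x(1) y(1)] y by metis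
  then show ?thesis using x by blast
qed

lemma no_triangle_V:
  assumes R: "cring R" and card: "card (GammaE_V R) = 3"
    and e1: "GammaE_E R X Y" and e2: "GammaE_E R Y Z" and e3: "GammaE_E R X Z"
  shows False
proof -
  interpret cring R by (rule R)
  have XV: "X \<in> GammaE_V R" "Y \<in> GammaE_V R" "Z \<in> GammaE_V R" and ne: "X \<noteq> Y" "Y \<noteq> Z" "X \<noteq> Z"
    using e1 e2 e3 unfolding GammaE_E_def by auto
  obtain a where a: "a \<in> zd_star R" "X = ann_class R a" using XV(1) by (rule GV_E)
  obtain b where b: "b \<in> zd_star R" "Y = ann_class R b" using XV(2) by (rule GV_E)
  obtain c where c: "c \<in> zd_star R" "Z = ann_class R c" using XV(3) by (rule GV_E)
  have ac: "a \<in> carrier R" and bc: "b \<in> carrier R" and cc: "c \<in> carrier R" using a b c by (auto simp: zd_iff)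
  have ab: "ann R a \<noteq> ann R b \<and> a \<otimes>\<^bsub>R\<^esub> b = \<zero>\<^bsub>R\<^esub>" using edge_iff[OF a(1) b(1)] e1 a b by simp
  have bcc: "ann R b \<noteq> ann R c \<and> b \<otimes>\<^bsub>R\<^esub> c = \<zero>\<^bsub>R\<^esub>" using edge_iff[OF b(1) c(1)] e2 b c by simp
  have acc: "ann R a \<noteq> ann R c \<and> a \<otimes>\<^bsub>R\<^esub> c = \<zero>\<^bsub>R\<^esub>" using edge_iff[OF a(1) c(1)] e3 a c by simp
  have fin: "finite (GammaE_V R)" using card by (intro card_ge_0_finite) simp
  have sub: "{X, Y, Z} \<subseteq> GammaE_V R" using XV by blast
  have "card {X, Y, Z} = 3" using ne by simp
  then have VV: "GammaE_V R = {X, Y, Z}" using card_subset_eq[OF fin sub] card by simp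
  have cover: "ann R y = ann R a \<or> ann R y = ann R b \<or> ann R y = ann R c" if y: "y \<in> zd_star R" for y
  proof -
    have yc: "y \<in> carrier R" using y by (simp add: zd_iff)
    have "ann_class R y \<in> {X, Y, Z}" using GV_I[OF y] VV by simp
    then show ?thesis using a b c class_eq_iff[OF yc ac] class_eq_iff[OF yc bc] class_eq_iff[OF yc cc] by auto
  qed
  show False
    using no_triangle[OF a(1) b(1) c(1)] ab bcc acc cover by blast
qed


lemma path_iso:
  assumes sg: "simple_graph W F" and W: "W = {p, q, r}" and d: "p \<noteq> q" "q \<noteq> r" "p \<noteq> r"
    and pq: "F p q" and qr: "F q r" and npr: "\<not> F p r"
  shows "graph_iso W F PV PE"
proof -
  define h where "h x = (if x = p then 0 else if x = q then 1 else (2::nat))" for x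
  have hv: "h p = 0" "h q = 1" "h r = 2" using d by (simp_all add: h_def)
  have sym: "F x y \<Longrightarrow> F y x" for x y using sg unfolding simple_graph_def by blast
  have irr: "\<not> F x x" for x using sg unfolding simple_graph_def by blast
  have "bij_betw h W PV"
    unfolding bij_betw_def W PV_def using hv d by (auto simp: inj_on_def)
  moreover have "\<forall>x\<in>W. \<forall>y\<in>W. F x y \<longleftrightarrow> PE (h x) (h y)"
    unfolding W using hv pq qr npr sym irr by (auto simp: PE_def) 
  ultimately show ?thesis unfolding graph_iso_def by blast
qed

lemma comb:
  assumes sg: "simple_graph W F" and card: "card W = 3"
    and noiso: "\<And>u. u \<in> W \<Longrightarrow> \<exists>v. F u v"
    and notri: "\<And>u v w. F u v \<Longrightarrow> F v w \<Longrightarrow> F u w \<Longrightarrow> False"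
  shows "graph_iso W F PV PE"
proof -
  obtain u v w where W: "W = {u, v, w}" and d: "u \<noteq> v" "v \<noteq> w" "u \<noteq> w"
    using card unfolding card_3_iff by blast
  have sym: "F x y \<Longrightarrow> F y x" for x y using sg unfolding simple_graph_def by blast
  have inW: "F x y \<Longrightarrow> y \<in> W \<and> x \<noteq> y" for x y using sg unfolding simple_graph_def by blast
  have nu: "F u v \<or> F u w" using noiso[of u] inW W by blast
  have nv: "F v u \<or> F v w" using noiso[of v] inW W by blast
  have nw: "F w u \<or> F w v" using noiso[of w] inW W by blast
  have "\<not> (F u v \<and> F v w \<and> F u w)" using notri by blast
  then consider "\<not> F u v" | "\<not> F v w" | "\<not> F u w" by blast
  then show ?thesis
  proof cases
    case 1
    then have "F u w" "F w v" using nu nv sym by blast+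
    moreover have "W = {u, w, v}" using W by blast
    ultimately show ?thesis using path_iso[OF sg _ _ _ _ _ _ 1] d by blast
  next
    case 2
    then have "F v u" "F u w" using nv nw sym by blast+
    moreover have "W = {v, u, w}" using W by blast
    ultimately show ?thesis using path_iso[OF sg _ _ _ _ _ _ 2] d by blast
  next
    case 3
    then have "F u v" "F v w" using nu nw sym by blast+
    then show ?thesis using path_iso[OF sg W _ _ _ _ _ 3] d by blast
  qed
qed


theorem corollary1p6:
  shows "\<exists>(V :: nat set) E. simple_graph V E \<and> card V = 3 \<and>
     (\<exists>R :: nat ring. cring R \<and> noetherian_ring R \<and>
        graph_iso (GammaE_V R) (GammaE_E R) V E) \<and>
     (\<forall>(R :: 'a ring) (W :: 'w set) F.
        cring R \<and> noetherian_ring R \<and> simple_graph W F \<and> card W = 3 \<and>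
        graph_iso (GammaE_V R) (GammaE_E R) W F \<longrightarrow> graph_iso W F V E)"
proof (rule exI[of _ PV], rule exI[of _ PE], intro conjI allI impI)
  show "simple_graph PV PE" by (auto simp: simple_graph_def PV_def PE_def)
  show "card PV = 3" by (simp add: PV_def)
  show "\<exists>R :: nat ring. cring R \<and> noetherian_ring R \<and> graph_iso (GammaE_V R) (GammaE_E R) PV PE"
    using cring_R16 noeth_R16 iso_R16 by blast
  fix R :: "'a ring" and W :: "'w set" and F
  assume h: "cring R \<and> noetherian_ring R \<and> simple_graph W F \<and> card W = 3 \<and>
        graph_iso (GammaE_V R) (GammaE_E R) W F"
  then have R: "cring R" and sg: "simple_graph W F" and cW: "card W = 3" by auto
  from h obtain f where bij: "bij_betw f (GammaE_V R) W"
    and eq: "\<forall>x\<in>GammaE_V R. \<forall>y\<in>GammaE_V R. GammaE_E R x y \<longleftrightarrow> F (f x) (f y)"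
    unfolding graph_iso_def by blast
  have cV: "card (GammaE_V R) = 3" using bij_betw_same_card[OF bij] cW by simp
  have fin: "finite (GammaE_V R)" using cV by (intro card_ge_0_finite) simp
  have img: "f ` GammaE_V R = W" using bij by (simp add: bij_betw_def)
  have inW: "F x y \<Longrightarrow> x \<in> W \<and> y \<in> W" for x y using sg unfolding simple_graph_def by blast
  have EV: "GammaE_E R X Y \<Longrightarrow> X \<in> GammaE_V R \<and> Y \<in> GammaE_V R" for X Y
    unfolding GammaE_E_def by blast
  show "graph_iso W F PV PE"
  proof (rule comb[OF sg cW])
    fix u assume "u \<in> W"
    then obtain X where X: "X \<in> GammaE_V R" "u = f X" using img by blast
    obtain Y where Y: "Y \<in> GammaE_V R" "Y \<noteq> X"
    proof -
      have "GammaE_V R - {X} \<noteq> {}"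
      proof
        assume "GammaE_V R - {X} = {}"
        then have "GammaE_V R \<subseteq> {X}" by blast
        then have "card (GammaE_V R) \<le> 1" using card_mono[of "{X}"] by fastforce
        with cV show False by simp
      qed
      then show ?thesis using that by blast
    qed
    obtain Z where Z: "GammaE_E R X Z" using no_isolated_V[OF R X(1) Y] by blast
    have "F (f X) (f Z)" using eq EV[OF Z] Z by blast
    then show "\<exists>v. F u v" using X by blast
  next
    fix u v w assume uv: "F u v" and vw: "F v w" and uw: "F u w"
    have uW: "u \<in> W" "v \<in> W" "w \<in> W" using inW uv vw by auto
    obtain X where X: "X \<in> GammaE_V R" "u = f X" using uW(1) img by blast
    obtain Y where Y: "Y \<in> GammaE_V R" "v = f Y" using uW(2) img by blast
    obtain Z where Z: "Z \<in> GammaE_V R" "w = f Z" using uW(3) img by blast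
    have "GammaE_E R X Y" "GammaE_E R Y Z" "GammaE_E R X Z"
      using eq X Y Z uv vw uw by blast+
    then show False using no_triangle_V[OF R cV] by blast
  qed
qed

end
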